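(* For $r\ge1$ let $H_r$ be the graph with vertex set $\{t_1,\ldots,t_{2r}\}$ and edge set $\{\{t_i,t_{r+i}\}: 1\le i\le r\}$. Then: (a) the graph $\mathcal{H}_r$ of $I_c(H_r)$ is a bipartite $r$-regular graph with $2^r$ vertices and $r2^{r-1}$ edges; (b) if $G$ is an unmixed bipartite graph without isolated vertices and $r=\alpha_0(G)$, then (after labeling the vertices suitably as $t_1,\dots,t_{2r}$) $G$ has the perfect matching $\{\{t_i,t_{r+i}\}\}_{i=1}^r$, and the graph $\mathcal{G}$ of $I_c(G)$ is a subgraph of $\mathcal{H}_r$. In particular $\mathcal{G}$ is bipartite.
   Context: A graph is unmixed if all its minimal vertex covers (inclusion-minimal vertex sets meeting every edge) have the same size; $\alpha_0$ is the minimum size of a vertex cover. For an unmixed graph with minimal vertex covers $C_1,\ldots,C_m$, the graph of its ideal of covers $I_c$ has vertex set $\{C_1,\ldots,C_m\}$ and $\{C_i,C_j\}$ ($i\neq j$) is an edge iff $|C_i\cup C_j|=|C_i|+1$. *)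

theory Defs
  imports Main
begin

definition simple_graph :: "'a set \<Rightarrow> 'a set set \<Rightarrow> bool" where
  "simple_graph V E \<longleftrightarrow> finite V \<and> (\<forall>e\<in>E. e \<subseteq> V \<and> card e = 2)"

definition vertex_cover :: "'a set \<Rightarrow> 'a set set \<Rightarrow> 'a set \<Rightarrow> bool" where
  "vertex_cover V E C \<longleftrightarrow> C \<subseteq> V \<and> (\<forall>e\<in>E. e \<inter> C \<noteq> {})"

definition minimal_vertex_cover :: "'a set \<Rightarrow> 'a set set \<Rightarrow> 'a set \<Rightarrow> bool" where
  "minimal_vertex_cover V E C \<longleftrightarrow> vertex_cover V E C \<and> (\<forall>D. D \<subset> C \<longrightarrow> \<not> vertex_cover V E D)"

definition unmixed :: "'a set \<Rightarrow> 'a set set \<Rightarrow> bool" where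
  "unmixed V E \<longleftrightarrow> (\<forall>C D. minimal_vertex_cover V E C \<longrightarrow> minimal_vertex_cover V E D \<longrightarrow> card C = card D)"

definition alpha0 :: "'a set \<Rightarrow> 'a set set \<Rightarrow> nat" where
  "alpha0 V E = Min (card ` {C. vertex_cover V E C})"

definition no_isolated_vertices :: "'a set \<Rightarrow> 'a set set \<Rightarrow> bool" where
  "no_isolated_vertices V E \<longleftrightarrow> (\<forall>v\<in>V. \<exists>e\<in>E. v \<in> e)"

definition bipartite :: "'a set \<Rightarrow> 'a set set \<Rightarrow> bool" where
  "bipartite V E \<longleftrightarrow> (\<exists>A B. A \<union> B = V \<and> A \<inter> B = {} \<and> (\<forall>e\<in>E. \<exists>a\<in>A. \<exists>b\<in>B. e = {a, b}))"

definition regular :: "'a set \<Rightarrow> 'a set set \<Rightarrow> nat \<Rightarrow> bool" where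
  "regular V E k \<longleftrightarrow> (\<forall>v\<in>V. card {e\<in>E. v \<in> e} = k)"

text \<open>The graph of the ideal of covers I_c: vertices are the minimal vertex covers,
  and C, D (distinct) are adjacent iff |C \<union> D| = |C| + 1.\<close>

definition cover_graph_vertices :: "'a set \<Rightarrow> 'a set set \<Rightarrow> 'a set set" where
  "cover_graph_vertices V E = {C. minimal_vertex_cover V E C}"

definition cover_graph_edges :: "'a set \<Rightarrow> 'a set set \<Rightarrow> 'a set set set" where
  "cover_graph_edges V E = {{C, D} | C D. minimal_vertex_cover V E C \<and> minimal_vertex_cover V E D
      \<and> C \<noteq> D \<and> card (C \<union> D) = card C + 1}"

definition H_vertices :: "nat \<Rightarrow> nat set" where
  "H_vertices r = {1..2*r}"

definition H_edges :: "nat \<Rightarrow> nat set set" where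
  "H_edges r = {{i, r + i} | i. 1 \<le> i \<and> i \<le> r}"

end

theory Submission
  imports Defs
begin

definition cov :: "nat \<Rightarrow> nat set \<Rightarrow> nat set" where
  "cov r S = S \<union> (\<lambda>i. r + i) ` ({1..r} - S)"

definition flip :: "nat set \<Rightarrow> nat \<Rightarrow> nat set" where
  "flip S i = (if i \<in> S then S - {i} else insert i S)"

lemma cov_sub: "S \<subseteq> {1..r} \<Longrightarrow> cov r S \<subseteq> {1..2*r}"
  unfolding cov_def by auto

lemma cov_low: "S \<subseteq> {1..r} \<Longrightarrow> cov r S \<inter> {1..r} = S"
  unfolding cov_def by auto

lemma cov_card: "S \<subseteq> {1..r} \<Longrightarrow> card (cov r S) = r"
proof -
  assume S: "S \<subseteq> {1..r}"
  have fin: "finite S" using finite_subset[OF S] by simp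
  have d: "S \<inter> (\<lambda>i. r + i) ` ({1..r} - S) = {}" using S by auto
  have "card (cov r S) = card S + card ((\<lambda>i. r + i) ` ({1..r} - S))"
    unfolding cov_def using d fin by (intro card_Un_disjoint) auto
  also have "card ((\<lambda>i. r + i) ` ({1..r} - S)) = card ({1..r} - S)"
    by (intro card_image) auto
  also have "card ({1..r} - S) = r - card S" using S fin by (simp add: card_Diff_subset)
  finally have e: "card (cov r S) = card S + (r - card S)" .
  have "card S \<le> card {1..r}" using S by (intro card_mono) auto
  hence "card S \<le> r" by simp
  thus ?thesis using e by linarith
qed

lemma cov_inj: "inj_on (cov r) (Pow {1..r})"
  by (rule inj_onI) (metis PowD cov_low)

lemma vc_H: "vertex_cover (H_vertices r) (H_edges r) C \<longleftrightarrow>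
   C \<subseteq> {1..2*r} \<and> (\<forall>i. 1 \<le> i \<and> i \<le> r \<longrightarrow> i \<in> C \<or> r + i \<in> C)"
  unfolding vertex_cover_def H_vertices_def H_edges_def by auto

lemma vc_cov_sub: "C \<subseteq> {1..2*r} \<Longrightarrow> (\<forall>i. 1 \<le> i \<and> i \<le> r \<longrightarrow> i \<in> C \<or> r + i \<in> C)
   \<Longrightarrow> cov r (C \<inter> {1..r}) \<subseteq> C"
  unfolding cov_def
  apply (intro Un_least image_subsetI)
   apply blast
  apply (simp only: Diff_iff Int_iff atLeastAtMost_iff)
  by blast

lemma cov_vc: "S \<subseteq> {1..r} \<Longrightarrow> vertex_cover (H_vertices r) (H_edges r) (cov r S)"
proof -
  assume S: "S \<subseteq> {1..r}"
  have h: "\<forall>i. 1 \<le> i \<and> i \<le> r \<longrightarrow> i \<in> cov r S \<or> r + i \<in> cov r S"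
  proof (intro allI impI)
    fix i assume i: "1 \<le> i \<and> i \<le> r"
    show "i \<in> cov r S \<or> r + i \<in> cov r S"
    proof (cases "i \<in> S")
      case True thus ?thesis unfolding cov_def by blast
    next
      case False
      hence "i \<in> {1..r} - S" using i by simp
      hence "r + i \<in> (\<lambda>i. r + i) ` ({1..r} - S)" by (rule imageI)
      thus ?thesis unfolding cov_def by blast
    qed
  qed
  show ?thesis apply (subst vc_H) using cov_sub[OF S] h by (intro conjI)
qed

lemma min_H: "minimal_vertex_cover (H_vertices r) (H_edges r) C \<longleftrightarrow> (\<exists>S\<subseteq>{1..r}. C = cov r S)"
proof
  assume m: "minimal_vertex_cover (H_vertices r) (H_edges r) C"
  have vc: "vertex_cover (H_vertices r) (H_edges r) C" using m by (simp add: minimal_vertex_cover_def)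
  have mm: "\<And>D. D \<subset> C \<Longrightarrow> \<not> vertex_cover (H_vertices r) (H_edges r) D"
    using m by (simp add: minimal_vertex_cover_def)
  note h = vc_H[THEN iffD1, OF vc]
  have sub: "cov r (C \<inter> {1..r}) \<subseteq> C" using vc_cov_sub[OF conjunct1[OF h] conjunct2[OF h]] .
  have v2: "vertex_cover (H_vertices r) (H_edges r) (cov r (C \<inter> {1..r}))" using cov_vc[OF Int_lower2] .
  have "cov r (C \<inter> {1..r}) = C"
  proof (rule ccontr)
    assume "cov r (C \<inter> {1..r}) \<noteq> C"
    hence "cov r (C \<inter> {1..r}) \<subset> C" using sub by (simp add: psubset_eq)
    thus False using mm v2 by simp
  qed
  thus "\<exists>S\<subseteq>{1..r}. C = cov r S" by (intro exI[of _ "C \<inter> {1..r}"]) simp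
next
  assume "\<exists>S\<subseteq>{1..r}. C = cov r S"
  then obtain S where S: "S \<subseteq> {1..r}" "C = cov r S" by blast
  have fC: "finite C" using finite_subset[OF cov_sub[OF S(1)]] S(2) by simp
  have cC: "card C = r" using S cov_card by simp
  have "\<not> vertex_cover (H_vertices r) (H_edges r) D" if D: "D \<subset> C" for D
  proof
    assume "vertex_cover (H_vertices r) (H_edges r) D"
    note h = vc_H[THEN iffD1, OF this]
    have s: "cov r (D \<inter> {1..r}) \<subseteq> D" using vc_cov_sub[OF conjunct1[OF h] conjunct2[OF h]] .
    have c: "card (cov r (D \<inter> {1..r})) = r" using cov_card[OF Int_lower2] .
    have "card D < card C" using psubset_card_mono[OF fC D] .
    moreover have "finite D" using finite_subset[OF psubset_imp_subset[OF D] fC] .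
    moreover have "card (cov r (D \<inter> {1..r})) \<le> card D"
      using card_mono[OF \<open>finite D\<close> s] .
    ultimately show False using c cC by linarith
  qed
  moreover have "vertex_cover (H_vertices r) (H_edges r) C" using S cov_vc by simp
  ultimately show "minimal_vertex_cover (H_vertices r) (H_edges r) C"
    unfolding minimal_vertex_cover_def by blast
qed

lemma min_H2: "C \<subseteq> {1..2*r} \<Longrightarrow> (\<forall>i. 1 \<le> i \<and> i \<le> r \<longrightarrow> i \<in> C \<or> r + i \<in> C)
   \<Longrightarrow> card C \<le> r \<Longrightarrow> minimal_vertex_cover (H_vertices r) (H_edges r) C"
proof -
  assume a: "C \<subseteq> {1..2*r}" "\<forall>i. 1 \<le> i \<and> i \<le> r \<longrightarrow> i \<in> C \<or> r + i \<in> C" "card C \<le> r"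
  have s: "cov r (C \<inter> {1..r}) \<subseteq> C" using vc_cov_sub a by blast
  have c: "card (cov r (C \<inter> {1..r})) = r" using cov_card[OF Int_lower2] .
  have "finite C" using finite_subset[OF a(1)] by simp
  hence "cov r (C \<inter> {1..r}) = C" using card_seteq[OF \<open>finite C\<close> s] c a(3) by simp
  thus ?thesis unfolding min_H by (intro exI[of _ "C \<inter> {1..r}"]) simp
qed

lemma img_hi: "(r::nat) < x \<Longrightarrow> x \<in> (\<lambda>i. r + i) ` A \<longleftrightarrow> x - r \<in> A"
proof
  assume "r < x" "x - r \<in> A"
  thus "x \<in> (\<lambda>i. r + i) ` A" by (intro rev_image_eqI[of "x - r"]) auto
qed auto

lemma img_lo: "x \<le> (r::nat) \<Longrightarrow> 0 \<notin> A \<Longrightarrow> x \<notin> (\<lambda>i. r + i) ` A"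
  by auto

lemma mem_cov_lo: "x \<le> r \<Longrightarrow> S \<subseteq> {1..r} \<Longrightarrow> x \<in> cov r S \<longleftrightarrow> x \<in> S"
proof -
  assume a: "x \<le> r" "S \<subseteq> {1..r}"
  have "(0::nat) \<notin> {1..r} - S" by simp
  thus ?thesis unfolding cov_def using img_lo[OF a(1)] by blast
qed

lemma mem_cov_hi: "r < x \<Longrightarrow> S \<subseteq> {1..r} \<Longrightarrow> x \<in> cov r S \<longleftrightarrow> x - r \<in> {1..r} - S"
proof -
  assume a: "r < x" "S \<subseteq> {1..r}"
  hence "x \<notin> {1..r}" by simp
  hence "x \<notin> S" using a by blast
  thus ?thesis unfolding cov_def using img_hi[OF a(1)] by simp
qed

lemma cov_diff: "S \<subseteq> {1..r} \<Longrightarrow> T \<subseteq> {1..r} \<Longrightarrow>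
   cov r T - cov r S = (T - S) \<union> (\<lambda>i. r + i) ` (S - T)"
proof (rule set_eqI)
  fix x assume S: "S \<subseteq> {1..r}" and T: "T \<subseteq> {1..r}"
  show "x \<in> cov r T - cov r S \<longleftrightarrow> x \<in> (T - S) \<union> (\<lambda>i. r + i) ` (S - T)"
  proof (cases "x \<le> r")
    case True
    have "(0::nat) \<notin> {1..r}" by simp
    hence "0 \<notin> S - T" using S by blast
    thus ?thesis using True mem_cov_lo[OF True S] mem_cov_lo[OF True T] img_lo[OF True] by blast
  next
    case False
    hence F: "r < x" by simp
    have "x \<notin> {1..r}" using F by simp
    hence "x \<notin> T" "x \<notin> S" using S T by blast+
    have 1: "x \<in> cov r T - cov r S \<longleftrightarrow> (x - r \<in> {1..r} \<and> x - r \<notin> T \<and> x - r \<in> S)"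
      using mem_cov_hi[OF F S] mem_cov_hi[OF F T] by auto
    have 2: "x \<in> (T - S) \<union> (\<lambda>i. r + i) ` (S - T) \<longleftrightarrow> x - r \<in> S - T"
      using img_hi[OF F] \<open>x \<notin> T\<close> by simp
    show ?thesis unfolding 1 2 using S by blast
  qed
qed

lemma card_cov_diff: "S \<subseteq> {1..r} \<Longrightarrow> T \<subseteq> {1..r} \<Longrightarrow>
   card (cov r T - cov r S) = card (T - S) + card (S - T)"
proof -
  assume S: "S \<subseteq> {1..r}" and T: "T \<subseteq> {1..r}"
  have f: "finite S" "finite T" using finite_subset[OF S] finite_subset[OF T] by auto
  have d: "(T - S) \<inter> (\<lambda>i. r + i) ` (S - T) = {}"
  proof (rule ccontr)
    assume "(T - S) \<inter> (\<lambda>i. r + i) ` (S - T) \<noteq> {}"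
    then obtain x where x: "x \<in> T - S" "x \<in> (\<lambda>i. r + i) ` (S - T)" by blast
    have "x \<in> {1..r}" using x(1) T by blast
    hence "x \<le> r" by simp
    have "(0::nat) \<notin> {1..r}" by simp
    hence "0 \<notin> S - T" using S by blast
    thus False using img_lo[OF \<open>x \<le> r\<close>] x(2) by blast
  qed
  have "card ((T - S) \<union> (\<lambda>i. r + i) ` (S - T)) = card (T - S) + card ((\<lambda>i. r + i) ` (S - T))"
    using f d by (intro card_Un_disjoint) auto
  also have "card ((\<lambda>i. r + i) ` (S - T)) = card (S - T)" by (intro card_image) auto
  finally show ?thesis using cov_diff[OF S T] by simp
qed

lemma card_Un_eq: "finite C \<Longrightarrow> finite D \<Longrightarrow> card (C \<union> D) = card C + card (D - C)"
proof -
  assume f: "finite C" "finite D"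
  have "C \<union> D = C \<union> (D - C)" by blast
  moreover have "card (C \<union> (D - C)) = card C + card (D - C)"
    using f by (intro card_Un_disjoint) auto
  ultimately show ?thesis by simp
qed

lemma adj_flip: "S \<subseteq> {1..r} \<Longrightarrow> T \<subseteq> {1..r} \<Longrightarrow>
   (card (T - S) + card (S - T) = 1) \<longleftrightarrow> (\<exists>i\<in>{1..r}. T = flip S i)"
proof
  assume S: "S \<subseteq> {1..r}" and T: "T \<subseteq> {1..r}" and c: "card (T - S) + card (S - T) = 1"
  have f: "finite (T - S)" "finite (S - T)" using finite_subset[OF S] finite_subset[OF T] by auto
  show "\<exists>i\<in>{1..r}. T = flip S i"
  proof (cases "card (T - S) = 1")
    case True
    then obtain i where i: "T - S = {i}" by (meson card_1_singletonE)
    have "card (S - T) = 0" using c True by simp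
    hence "S - T = {}" using f by simp
    hence "T = flip S i" using i unfolding flip_def by auto
    moreover have "i \<in> {1..r}" using i T by blast
    ultimately show ?thesis by blast
  next
    case False
    hence "card (S - T) = 1" "card (T - S) = 0" using c by linarith+
    then obtain i where i: "S - T = {i}" by (meson card_1_singletonE)
    have "T - S = {}" using \<open>card (T - S) = 0\<close> f by simp
    hence "T = flip S i" using i unfolding flip_def by auto
    moreover have "i \<in> {1..r}" using i S by blast
    ultimately show ?thesis by blast
  qed
next
  assume "\<exists>i\<in>{1..r}. T = flip S i"
  then obtain i where i: "T = flip S i" by blast
  show "card (T - S) + card (S - T) = 1"
  proof (cases "i \<in> S")
    case True
    hence a: "T - S = {}" "S - T = {i}" using i unfolding flip_def by auto
    show ?thesis unfolding a by simp
  next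
    case False
    hence a: "T - S = {i}" "S - T = {}" using i unfolding flip_def by auto
    show ?thesis unfolding a by simp
  qed
qed



lemma flip_sub: "S \<subseteq> {1..r} \<Longrightarrow> i \<in> {1..r} \<Longrightarrow> flip S i \<subseteq> {1..r}"
  unfolding flip_def by auto

lemma flip_flip: "flip (flip S i) i = S"
  unfolding flip_def by auto

lemma flip_ne: "flip S i \<noteq> S"
  unfolding flip_def by auto

lemma flip_inj: "flip S i = flip S j \<Longrightarrow> i = j"
proof (rule ccontr)
  assume e: "flip S i = flip S j" and n: "i \<noteq> j"
  have "i \<in> flip S i \<longleftrightarrow> i \<notin> S" unfolding flip_def by auto
  moreover have "i \<in> flip S j \<longleftrightarrow> i \<in> S" using n unfolding flip_def by auto
  ultimately show False using e by simp
qed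

lemma card_flip: "finite S \<Longrightarrow> card (flip S i) = (if i \<in> S then card S - 1 else Suc (card S))"
  unfolding flip_def by simp

lemma adjH: "S \<subseteq> {1..r} \<Longrightarrow> T \<subseteq> {1..r} \<Longrightarrow>
  (cov r S \<noteq> cov r T \<and> card (cov r S \<union> cov r T) = card (cov r S) + 1) \<longleftrightarrow> (\<exists>i\<in>{1..r}. T = flip S i)"
proof -
  assume S: "S \<subseteq> {1..r}" and T: "T \<subseteq> {1..r}"
  have fS: "finite (cov r S)" using finite_subset[OF cov_sub[OF S]] by simp
  have fT: "finite (cov r T)" using finite_subset[OF cov_sub[OF T]] by simp
  have c: "card (cov r S \<union> cov r T) = card (cov r S) + (card (T - S) + card (S - T))"
    using card_Un_eq[OF fS fT] card_cov_diff[OF S T] by simp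
  show ?thesis
  proof
    assume "cov r S \<noteq> cov r T \<and> card (cov r S \<union> cov r T) = card (cov r S) + 1"
    hence "card (T - S) + card (S - T) = 1" using c by simp
    thus "\<exists>i\<in>{1..r}. T = flip S i" using adj_flip[OF S T] by simp
  next
    assume a: "\<exists>i\<in>{1..r}. T = flip S i"
    hence "card (T - S) + card (S - T) = 1" using adj_flip[OF S T] by simp
    moreover have "S \<noteq> T" using a flip_ne by metis
    hence "cov r S \<noteq> cov r T" using cov_low[OF S] cov_low[OF T] by metis
    ultimately show "cov r S \<noteq> cov r T \<and> card (cov r S \<union> cov r T) = card (cov r S) + 1"
      using c by simp
  qed
qed

lemma VH: "cover_graph_vertices (H_vertices r) (H_edges r) = cov r ` Pow {1..r}"
  unfolding cover_graph_vertices_def min_H by blast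

lemma EH_mem: "e \<in> cover_graph_edges (H_vertices r) (H_edges r) \<longleftrightarrow>
   (\<exists>S i. S \<subseteq> {1..r} \<and> i \<in> {1..r} \<and> e = {cov r S, cov r (flip S i)})"
proof
  assume "e \<in> cover_graph_edges (H_vertices r) (H_edges r)"
  then obtain C D where e: "e = {C, D}" "minimal_vertex_cover (H_vertices r) (H_edges r) C"
    "minimal_vertex_cover (H_vertices r) (H_edges r) D" "C \<noteq> D" "card (C \<union> D) = card C + 1"
    unfolding cover_graph_edges_def by blast
  obtain S where S: "S \<subseteq> {1..r}" "C = cov r S" using e(2) unfolding min_H by blast
  obtain T where T: "T \<subseteq> {1..r}" "D = cov r T" using e(3) unfolding min_H by blast
  obtain i where i: "i \<in> {1..r}" "T = flip S i" using adjH[OF S(1) T(1)] e(4,5) S(2) T(2) by blast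
  show "\<exists>S i. S \<subseteq> {1..r} \<and> i \<in> {1..r} \<and> e = {cov r S, cov r (flip S i)}"
    using S i e(1) T(2) by blast
next
  assume "\<exists>S i. S \<subseteq> {1..r} \<and> i \<in> {1..r} \<and> e = {cov r S, cov r (flip S i)}"
  then obtain S i where a: "S \<subseteq> {1..r}" "i \<in> {1..r}" "e = {cov r S, cov r (flip S i)}" by blast
  have T: "flip S i \<subseteq> {1..r}" using flip_sub[OF a(1,2)] .
  have m1: "minimal_vertex_cover (H_vertices r) (H_edges r) (cov r S)" unfolding min_H using a(1) by blast
  have m2: "minimal_vertex_cover (H_vertices r) (H_edges r) (cov r (flip S i))" unfolding min_H using T by blast
  have ad: "cov r S \<noteq> cov r (flip S i) \<and> card (cov r S \<union> cov r (flip S i)) = card (cov r S) + 1"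
    using adjH[OF a(1) T] a(2) by blast
  show "e \<in> cover_graph_edges (H_vertices r) (H_edges r)"
    unfolding cover_graph_edges_def using a(3) m1 m2 ad by blast
qed



lemma doubleton_right: "{a, b} = {a, c} \<Longrightarrow> b = c"
  by (metis doubleton_eq_iff)

lemma deg_H: assumes S: "S \<subseteq> {1..r}"
  shows "{e \<in> cover_graph_edges (H_vertices r) (H_edges r). cov r S \<in> e}
       = (\<lambda>i. {cov r S, cov r (flip S i)}) ` {1..r}"
proof (rule set_eqI)
  fix e
  show "e \<in> {e \<in> cover_graph_edges (H_vertices r) (H_edges r). cov r S \<in> e} \<longleftrightarrow>
        e \<in> (\<lambda>i. {cov r S, cov r (flip S i)}) ` {1..r}"
  proof
    assume "e \<in> {e \<in> cover_graph_edges (H_vertices r) (H_edges r). cov r S \<in> e}"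
    hence e1: "e \<in> cover_graph_edges (H_vertices r) (H_edges r)" and e2: "cov r S \<in> e" by auto
    obtain S' i where a: "S' \<subseteq> {1..r}" "i \<in> {1..r}" "e = {cov r S', cov r (flip S' i)}"
      using e1 unfolding EH_mem by blast
    have T: "flip S' i \<subseteq> {1..r}" using flip_sub[OF a(1,2)] .
    have "cov r S = cov r S' \<or> cov r S = cov r (flip S' i)" using e2 a(3) by blast
    hence "S = S' \<or> S = flip S' i" using cov_low[OF S] cov_low[OF a(1)] cov_low[OF T] by metis
    thus "e \<in> (\<lambda>i. {cov r S, cov r (flip S i)}) ` {1..r}"
    proof
      assume "S = S'" thus ?thesis using a by blast
    next
      assume h: "S = flip S' i"
      hence "S' = flip S i" using flip_flip by metis
      hence "e = {cov r (flip S i), cov r S}" using a(3) h by simp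
      hence "e = {cov r S, cov r (flip S i)}" by (simp add: insert_commute)
      thus ?thesis using a(2) by blast
    qed
  next
    assume "e \<in> (\<lambda>i. {cov r S, cov r (flip S i)}) ` {1..r}"
    then obtain i where i: "i \<in> {1..r}" "e = {cov r S, cov r (flip S i)}" by blast
    have "e \<in> cover_graph_edges (H_vertices r) (H_edges r)" unfolding EH_mem using S i by blast
    thus "e \<in> {e \<in> cover_graph_edges (H_vertices r) (H_edges r). cov r S \<in> e}" using i by blast
  qed
qed

lemma deg_H_card: assumes S: "S \<subseteq> {1..r}"
  shows "card {e \<in> cover_graph_edges (H_vertices r) (H_edges r). cov r S \<in> e} = r"
proof -
  have "inj_on (\<lambda>i. {cov r S, cov r (flip S i)}) {1..r}"
  proof (rule inj_onI)
    fix i j assume i: "i \<in> {1..r}" and j: "j \<in> {1..r}"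
      and e: "{cov r S, cov r (flip S i)} = {cov r S, cov r (flip S j)}"
    have "cov r (flip S i) = cov r (flip S j)" using doubleton_right[OF e] .
    hence "flip S i = flip S j"
      using cov_low[OF flip_sub[OF S i]] cov_low[OF flip_sub[OF S j]] by metis
    thus "i = j" by (rule flip_inj)
  qed
  hence "card ((\<lambda>i. {cov r S, cov r (flip S i)}) ` {1..r}) = card {1..r}" by (rule card_image)
  thus ?thesis unfolding deg_H[OF S] by simp
qed

lemma regular_H: "regular (cover_graph_vertices (H_vertices r) (H_edges r))
                    (cover_graph_edges (H_vertices r) (H_edges r)) r"
  unfolding regular_def VH using deg_H_card by blast

lemma card_VH: "card (cover_graph_vertices (H_vertices r) (H_edges r)) = 2 ^ r"
proof -
  have "card (cov r ` Pow {1..r}) = card (Pow {1..(r::nat)})" using cov_inj by (rule card_image)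
  also have "\<dots> = 2 ^ r" by (simp add: card_Pow)
  finally show ?thesis unfolding VH .
qed

lemma bip_H: "bipartite (cover_graph_vertices (H_vertices r) (H_edges r))
                      (cover_graph_edges (H_vertices r) (H_edges r))"
  unfolding bipartite_def
proof (intro exI conjI)
  let ?V = "cover_graph_vertices (H_vertices r) (H_edges r)"
  let ?P = "{C \<in> ?V. even (card (C \<inter> {1..r}))}"
  let ?Q = "{C \<in> ?V. odd (card (C \<inter> {1..r}))}"
  show "?P \<union> ?Q = ?V" by blast
  show "?P \<inter> ?Q = {}" by blast
  show "\<forall>e\<in>cover_graph_edges (H_vertices r) (H_edges r). \<exists>a\<in>?P. \<exists>b\<in>?Q. e = {a, b}"
  proof
    fix e assume "e \<in> cover_graph_edges (H_vertices r) (H_edges r)"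
    then obtain S i where a: "S \<subseteq> {1..r}" "i \<in> {1..r}" "e = {cov r S, cov r (flip S i)}"
      unfolding EH_mem by blast
    have T: "flip S i \<subseteq> {1..r}" using flip_sub[OF a(1,2)] .
    have fS: "finite S" using finite_subset[OF a(1)] by simp
    have v1: "cov r S \<in> ?V" unfolding VH using a(1) by blast
    have v2: "cov r (flip S i) \<in> ?V" unfolding VH using T by blast
    have c1: "card (cov r S \<inter> {1..r}) = card S" using cov_low[OF a(1)] by simp
    have c2: "card (cov r (flip S i) \<inter> {1..r}) = card (flip S i)" using cov_low[OF T] by simp
    have par: "even (card S) \<longleftrightarrow> odd (card (flip S i))"
    proof (cases "i \<in> S")
      case True
      hence "card S \<noteq> 0" using fS by auto
      hence "card (flip S i) = card S - 1" "card S = Suc (card S - 1)" using card_flip[OF fS, of i] True by simp_all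
      thus ?thesis by (metis even_Suc)
    next
      case False thus ?thesis using card_flip[OF fS, of i] by simp
    qed
    show "\<exists>a\<in>?P. \<exists>b\<in>?Q. e = {a, b}"
    proof (cases "even (card S)")
      case True
      hence "cov r S \<in> ?P" using v1 c1 by simp
      moreover have "cov r (flip S i) \<in> ?Q" using v2 c2 par True by simp
      ultimately show ?thesis using a(3) by blast
    next
      case False
      hence "cov r S \<in> ?Q" using v1 c1 by simp
      moreover have "cov r (flip S i) \<in> ?P" using v2 c2 par False by simp
      moreover have "e = {cov r (flip S i), cov r S}" using a(3) by (simp add: insert_commute)
      ultimately show ?thesis by blast
    qed
  qed
qed

lemma card_filter_sum: "finite A \<Longrightarrow> card {x \<in> A. P x} = (\<Sum>x\<in>A. if P x then 1 else 0)"
  using sum.inter_filter[of A "\<lambda>_. (1::nat)" P] by simp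

lemma handshake:
  assumes fV: "finite V" and fE: "finite E" and e: "\<forall>e\<in>E. e \<subseteq> V \<and> card e = 2"
  shows "(\<Sum>v\<in>V. card {e \<in> E. v \<in> e}) = 2 * card E"
proof -
  have "(\<Sum>v\<in>V. card {e \<in> E. v \<in> e}) = (\<Sum>v\<in>V. \<Sum>e\<in>E. if v \<in> e then 1 else 0)"
    using card_filter_sum[OF fE] by simp
  also have "\<dots> = (\<Sum>e\<in>E. \<Sum>v\<in>V. if v \<in> e then 1 else 0)" by (rule sum.swap)
  also have "\<dots> = (\<Sum>e\<in>E. card {v \<in> V. v \<in> e})" using card_filter_sum[OF fV] by simp
  also have "\<dots> = (\<Sum>e\<in>E. 2)"
  proof (rule sum.cong)
    fix x assume "x \<in> E"
    hence "{v \<in> V. v \<in> x} = x" "card x = 2" using e by auto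
    thus "card {v \<in> V. v \<in> x} = 2" by simp
  qed simp
  finally show ?thesis by simp
qed

lemma card_EH: assumes r: "r \<ge> 1"
  shows "card (cover_graph_edges (H_vertices r) (H_edges r)) = r * 2 ^ (r - 1)"
proof -
  let ?V = "cover_graph_vertices (H_vertices r) (H_edges r)"
  let ?E = "cover_graph_edges (H_vertices r) (H_edges r)"
  have fV: "finite ?V" unfolding VH by simp
  have sub: "?E \<subseteq> Pow ?V"
  proof
    fix e assume "e \<in> ?E"
    then obtain S i where a: "S \<subseteq> {1..r}" "i \<in> {1..r}" "e = {cov r S, cov r (flip S i)}"
      unfolding EH_mem by blast
    have T: "flip S i \<subseteq> {1..r}" using flip_sub[OF a(1,2)] .
    show "e \<in> Pow ?V" unfolding VH using a T by blast
  qed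
  hence fE: "finite ?E" using fV by (meson finite_Pow_iff finite_subset)
  have e2: "\<forall>e\<in>?E. e \<subseteq> ?V \<and> card e = 2"
  proof
    fix e assume "e \<in> ?E"
    then obtain C D where e: "e = {C, D}" "C \<noteq> D"
      unfolding cover_graph_edges_def by blast
    show "e \<subseteq> ?V \<and> card e = 2" using e sub \<open>e \<in> ?E\<close> by auto
  qed
  have "(\<Sum>v\<in>?V. card {e \<in> ?E. v \<in> e}) = (\<Sum>v\<in>?V. r)"
    using regular_H unfolding regular_def by (intro sum.cong) auto
  hence "2 * card ?E = 2 ^ r * r" using handshake[OF fV fE e2] card_VH by simp
  moreover have "(2::nat) ^ r = 2 * 2 ^ (r - 1)" using r by (metis Suc_diff_1 less_eq_Suc_le One_nat_def power_Suc)
  ultimately show ?thesis by simp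
qed



lemma hall_aux:
  "\<forall>(A::'a set) (N::'a \<Rightarrow> 'b set). card A = n \<longrightarrow> finite A \<longrightarrow> (\<forall>a\<in>A. finite (N a)) \<longrightarrow>
     (\<forall>S\<subseteq>A. card S \<le> card (\<Union>(N ` S))) \<longrightarrow> (\<exists>g. inj_on g A \<and> (\<forall>a\<in>A. g a \<in> N a))"
proof (induction n rule: less_induct)
  case (less n)
  show ?case
  proof (intro allI impI)
    fix A :: "'a set" and N :: "'a \<Rightarrow> 'b set"
    assume n: "card A = n" and fA: "finite A" and fN: "\<forall>a\<in>A. finite (N a)"
      and hc: "\<forall>S\<subseteq>A. card S \<le> card (\<Union>(N ` S))"
    have fU: "finite (\<Union>(N ` T))" if "T \<subseteq> A" for T
    proof -
      have "finite T" using finite_subset[OF that fA] .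
      moreover have "\<forall>a\<in>T. finite (N a)" using fN that by blast
      ultimately show ?thesis by simp
    qed
    show "\<exists>g. inj_on g A \<and> (\<forall>a\<in>A. g a \<in> N a)"
    proof (cases "A = {}")
      case True thus ?thesis by simp
    next
      case Ane: False
      show ?thesis
      proof (cases "\<exists>S. S \<noteq> {} \<and> S \<subset> A \<and> card (\<Union>(N ` S)) \<le> card S")
        case True
        then obtain S where S: "S \<noteq> {}" "S \<subset> A" "card (\<Union>(N ` S)) \<le> card S" by blast
        have SA: "S \<subseteq> A" using S(2) by blast
        have fS: "finite S" using finite_subset[OF SA fA] .
        have cS: "card S < n" using psubset_card_mono[OF fA S(2)] n by simp
        have "\<exists>g. inj_on g S \<and> (\<forall>a\<in>S. g a \<in> N a)"
          using less.IH[OF cS, rule_format, of S N] fS fN hc SA by blast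
        then obtain g1 where g1: "inj_on g1 S" "\<forall>a\<in>S. g1 a \<in> N a" by blast
        define U where "U = \<Union>(N ` S)"
        define N' where "N' = (\<lambda>a. N a - U)"
        have cAS: "card (A - S) < n"
        proof -
          have "card S > 0" using S(1) fS by (simp add: card_gt_0_iff)
          moreover have "card (A - S) = card A - card S" using card_Diff_subset[OF fS SA] .
          moreover have "card S \<le> card A" using card_mono[OF fA SA] .
          ultimately show ?thesis using n by linarith
        qed
        have hc2: "\<forall>T\<subseteq>A - S. card T \<le> card (\<Union>(N' ` T))"
        proof (intro allI impI)
          fix T assume T: "T \<subseteq> A - S"
          have TS: "T \<union> S \<subseteq> A" using T SA by blast
          have fT: "finite T" using finite_subset[OF T] fA by simp
          have eq: "\<Union>(N' ` T) = \<Union>(N ` (T \<union> S)) - U" unfolding N'_def U_def by blast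
          have Usub: "U \<subseteq> \<Union>(N ` (T \<union> S))" unfolding U_def by blast
          have "card (\<Union>(N' ` T)) = card (\<Union>(N ` (T \<union> S))) - card U"
            unfolding eq using card_Diff_subset[OF finite_subset[OF Usub fU[OF TS]] Usub] .
          moreover have "card (T \<union> S) \<le> card (\<Union>(N ` (T \<union> S)))" using hc TS by blast
          moreover have "card (T \<union> S) = card T + card S"
            using card_Un_disjoint[OF fT fS] T by blast
          moreover have "card U \<le> card S" using S(3) unfolding U_def .
          ultimately show "card T \<le> card (\<Union>(N' ` T))" by linarith
        qed
        have "\<exists>g. inj_on g (A - S) \<and> (\<forall>a\<in>A - S. g a \<in> N' a)"
          using less.IH[OF cAS, rule_format, of "A - S" N'] fA fN hc2 unfolding N'_def by blast
        then obtain g2 where g2: "inj_on g2 (A - S)" "\<forall>a\<in>A - S. g2 a \<in> N' a" by blast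
        define g where "g = (\<lambda>a. if a \<in> S then g1 a else g2 a)"
        have "inj_on g A"
        proof (rule inj_onI)
          fix x y assume x: "x \<in> A" and y: "y \<in> A" and e: "g x = g y"
          show "x = y"
          proof (cases "x \<in> S")
            case xS: True
            show ?thesis
            proof (cases "y \<in> S")
              case True thus ?thesis using xS e g1(1) unfolding g_def by (simp add: inj_on_def)
            next
              case False
              have "g x \<in> U" using xS g1(2) unfolding g_def U_def by auto
              moreover have "g y \<notin> U" using False y g2(2) unfolding g_def N'_def by auto
              ultimately show ?thesis using e by simp
            qed
          next
            case xS: False
            show ?thesis
            proof (cases "y \<in> S")
              case True
              have "g y \<in> U" using True g1(2) unfolding g_def U_def by auto
              moreover have "g x \<notin> U" using xS x g2(2) unfolding g_def N'_def by auto
              ultimately show ?thesis using e by simp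
            next
              case False thus ?thesis using xS x y e g2(1) unfolding g_def by (simp add: inj_on_def)
            qed
          qed
        qed
        moreover have "\<forall>a\<in>A. g a \<in> N a" using g1(2) g2(2) unfolding g_def N'_def by auto
        ultimately show ?thesis by blast
      next
        case False
        hence strict: "\<And>S. S \<noteq> {} \<Longrightarrow> S \<subset> A \<Longrightarrow> card S < card (\<Union>(N ` S))" by (meson not_le)
        obtain a where a: "a \<in> A" using Ane by blast
        have "card {a} \<le> card (\<Union>(N ` {a}))" using hc a by blast
        hence "card (N a) \<ge> 1" by simp
        hence "N a \<noteq> {}" by auto
        then obtain b where b: "b \<in> N a" by blast
        define N' where "N' = (\<lambda>x. N x - {b})"
        have "card A > 0" using a fA by (auto simp: card_gt_0_iff)
        hence cA: "card (A - {a}) < n" using a fA n by simp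
        have hc2: "\<forall>T\<subseteq>A - {a}. card T \<le> card (\<Union>(N' ` T))"
        proof (intro allI impI)
          fix T assume T: "T \<subseteq> A - {a}"
          show "card T \<le> card (\<Union>(N' ` T))"
          proof (cases "T = {}")
            case True thus ?thesis by simp
          next
            case False
            have "T \<subset> A" using T a by blast
            hence lt: "card T < card (\<Union>(N ` T))" using strict False by blast
            have eq: "\<Union>(N' ` T) = \<Union>(N ` T) - {b}" unfolding N'_def by blast
            have "card (\<Union>(N ` T)) - 1 \<le> card (\<Union>(N ` T) - {b})"
              by (simp add: card_Diff_singleton_if)
            thus ?thesis unfolding eq using lt by linarith
          qed
        qed
        have "\<exists>g. inj_on g (A - {a}) \<and> (\<forall>x\<in>A - {a}. g x \<in> N' x)"
          using less.IH[OF cA, rule_format, of "A - {a}" N'] fA fN hc2 unfolding N'_def by blast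
        then obtain g' where g': "inj_on g' (A - {a})" "\<forall>x\<in>A - {a}. g' x \<in> N' x" by blast
        define g where "g = g'(a := b)"
        have "inj_on g A"
        proof (rule inj_onI)
          fix x y assume x: "x \<in> A" and y: "y \<in> A" and e: "g x = g y"
          have nb: "z \<in> A \<Longrightarrow> z \<noteq> a \<Longrightarrow> g z \<noteq> b" for z using g'(2) unfolding g_def N'_def by auto
          show "x = y"
          proof (cases "x = a")
            case True thus ?thesis using nb[OF y] e unfolding g_def by fastforce
          next
            case False
            show ?thesis
            proof (cases "y = a")
              case True thus ?thesis using nb[OF x False] e unfolding g_def by fastforce
            next
              case yF: False
              thus ?thesis using False x y e g'(1) unfolding g_def by (simp add: inj_on_def)
            qed
          qed
        qed
        moreover have "\<forall>x\<in>A. g x \<in> N x" using g'(2) b unfolding g_def N'_def by auto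
        ultimately show ?thesis by blast
      qed
    qed
  qed
qed

lemma hall:
  fixes A :: "'a set" and N :: "'a \<Rightarrow> 'b set"
  assumes "finite A" "\<forall>a\<in>A. finite (N a)" "\<forall>S\<subseteq>A. card S \<le> card (\<Union>(N ` S))"
  shows "\<exists>g. inj_on g A \<and> (\<forall>a\<in>A. g a \<in> N a)"
  using hall_aux[of "card A"] assms by blast



lemma min_exists: "finite C \<Longrightarrow> vertex_cover V E C \<Longrightarrow> \<exists>C'\<subseteq>C. minimal_vertex_cover V E C'"
proof (induction C rule: finite_psubset_induct)
  case (psubset C)
  show ?case
  proof (cases "minimal_vertex_cover V E C")
    case True thus ?thesis by blast
  next
    case False
    then obtain D where D: "D \<subset> C" "vertex_cover V E D"
      using psubset.prems unfolding minimal_vertex_cover_def by blast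
    then obtain C' where "C' \<subseteq> D" "minimal_vertex_cover V E C'" using psubset.IH by blast
    thus ?thesis using D(1) by blast
  qed
qed

lemma side_min:
  assumes AV: "A \<subseteq> V" and AB: "A \<inter> B = {}" and e: "\<forall>e\<in>E. \<exists>a\<in>A. \<exists>b\<in>B. e = {a, b}"
    and ni: "no_isolated_vertices V E"
  shows "minimal_vertex_cover V E A"
  unfolding minimal_vertex_cover_def
proof (intro conjI allI impI)
  show "vertex_cover V E A" unfolding vertex_cover_def using AV e by blast
  fix D assume D: "D \<subset> A"
  then obtain x where x: "x \<in> A" "x \<notin> D" by blast
  obtain ed where ed: "ed \<in> E" "x \<in> ed" using ni x(1) AV unfolding no_isolated_vertices_def by blast
  obtain a b where ab: "a \<in> A" "b \<in> B" "ed = {a, b}" using e ed(1) by blast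
  have "x \<noteq> b" using x(1) ab(2) AB by blast
  hence "x = a" using ed(2) ab(3) by blast
  have "b \<notin> D" using ab(2) AB D by blast
  hence "ed \<inter> D = {}" using ab(3) \<open>x = a\<close> x(2) by blast
  thus "\<not> vertex_cover V E D" unfolding vertex_cover_def using ed(1) by blast
qed

lemma bip_transfer:
  assumes bp: "bipartite V' E'"
    and vv: "\<forall>C\<in>cover_graph_vertices V E. \<phi> C \<in> V'"
    and ee: "\<forall>C D. {C, D} \<in> cover_graph_edges V E \<longrightarrow> {\<phi> C, \<phi> D} \<in> E'"
  shows "bipartite (cover_graph_vertices V E) (cover_graph_edges V E)"
proof -
  obtain P Q where PQ: "P \<union> Q = V'" "P \<inter> Q = {}" "\<forall>e\<in>E'. \<exists>a\<in>P. \<exists>b\<in>Q. e = {a, b}"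
    using bp unfolding bipartite_def by blast
  let ?VG = "cover_graph_vertices V E"
  let ?A = "{C \<in> ?VG. \<phi> C \<in> P}"
  let ?B = "{C \<in> ?VG. \<phi> C \<in> Q}"
  have "?A \<union> ?B = ?VG" using vv PQ(1) by blast
  moreover have "?A \<inter> ?B = {}" using PQ(2) by blast
  moreover have "\<forall>e\<in>cover_graph_edges V E. \<exists>a\<in>?A. \<exists>b\<in>?B. e = {a, b}"
  proof
    fix e assume e: "e \<in> cover_graph_edges V E"
    then obtain C D where CD: "e = {C, D}" "minimal_vertex_cover V E C" "minimal_vertex_cover V E D"
      unfolding cover_graph_edges_def by blast
    have CV: "C \<in> ?VG" "D \<in> ?VG" using CD unfolding cover_graph_vertices_def by auto
    have "{\<phi> C, \<phi> D} \<in> E'" using ee e CD(1) by blast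
    then obtain p q where pq: "p \<in> P" "q \<in> Q" "{\<phi> C, \<phi> D} = {p, q}" using PQ(3) by blast
    hence "(\<phi> C = p \<and> \<phi> D = q) \<or> (\<phi> C = q \<and> \<phi> D = p)" by (simp add: doubleton_eq_iff)
    thus "\<exists>a\<in>?A. \<exists>b\<in>?B. e = {a, b}"
    proof
      assume "\<phi> C = p \<and> \<phi> D = q"
      thus ?thesis using CV pq CD(1) by blast
    next
      assume "\<phi> C = q \<and> \<phi> D = p"
      moreover have "e = {D, C}" using CD(1) by (simp add: insert_commute)
      ultimately show ?thesis using CV pq by blast
    qed
  qed
  ultimately show ?thesis unfolding bipartite_def by blast
qed

lemma shift_bij: "bij_betw (\<lambda>i. i - r) {r+1..2*r} {1..(r::nat)}"
  unfolding bij_betw_def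
proof
  show "inj_on (\<lambda>i. i - r) {r + 1..2 * r}" by (rule inj_onI) auto
  show "(\<lambda>i. i - r) ` {r + 1..2 * r} = {1..r}"
  proof (rule set_eqI)
    fix x show "x \<in> (\<lambda>i. i - r) ` {r + 1..2 * r} \<longleftrightarrow> x \<in> {1..r}"
    proof
      assume "x \<in> {1..r}"
      thus "x \<in> (\<lambda>i. i - r) ` {r + 1..2 * r}" by (intro rev_image_eqI[of "x + r"]) auto
    qed auto
  qed
qed



lemma partb:
  assumes sg: "simple_graph V E" and um: "unmixed V E" and bp: "bipartite V E"
    and ni: "no_isolated_vertices V E" and r: "r = alpha0 V E"
  shows "\<exists>f. bij_betw f V (H_vertices r)
           \<and> (\<forall>i. 1 \<le> i \<and> i \<le> r \<longrightarrow>
                 (\<exists>a\<in>V. \<exists>b\<in>V. f a = i \<and> f b = r + i \<and> {a, b} \<in> E))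
           \<and> (\<forall>C \<in> cover_graph_vertices V E.
                 f ` C \<in> cover_graph_vertices (H_vertices r) (H_edges r))
           \<and> (\<forall>C D. {C, D} \<in> cover_graph_edges V E \<longrightarrow>
                 {f ` C, f ` D} \<in> cover_graph_edges (H_vertices r) (H_edges r))"
proof -
  obtain A B where AB: "A \<union> B = V" "A \<inter> B = {}" "\<forall>e\<in>E. \<exists>a\<in>A. \<exists>b\<in>B. e = {a, b}"
    using bp unfolding bipartite_def by blast
  have fV: "finite V" using sg unfolding simple_graph_def by blast
  have AV: "A \<subseteq> V" and BV: "B \<subseteq> V" using AB(1) by blast+
  have fA: "finite A" using finite_subset[OF AV fV] .
  have fB: "finite B" using finite_subset[OF BV fV] .
  have mA: "minimal_vertex_cover V E A" using side_min[OF AV AB(2) AB(3) ni] .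
  have BA: "B \<inter> A = {}" using AB(2) by blast
  have eBA: "\<forall>e\<in>E. \<exists>b\<in>B. \<exists>a\<in>A. e = {b, a}" using AB(3) by (metis insert_commute)
  have mB: "minimal_vertex_cover V E B" using side_min[OF BV BA eBA ni] .
  have cm: "\<And>C. minimal_vertex_cover V E C \<Longrightarrow> card C = card A"
    using um mA unfolding unmixed_def by blast
  have cB: "card B = card A" using cm[OF mB] .
  have vcA: "vertex_cover V E A" using mA unfolding minimal_vertex_cover_def by blast
  have vc_ge: "card A \<le> card C" if vc: "vertex_cover V E C" for C
  proof -
    have CV: "C \<subseteq> V" using vc unfolding vertex_cover_def by blast
    have fC: "finite C" using finite_subset[OF CV fV] .
    obtain C' where C': "C' \<subseteq> C" "minimal_vertex_cover V E C'" using min_exists[OF fC vc] by blast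
    show ?thesis using cm[OF C'(2)] card_mono[OF fC C'(1)] by simp
  qed
  have rA: "r = card A"
  proof -
    have "{C. vertex_cover V E C} \<subseteq> Pow V" unfolding vertex_cover_def by blast
    hence fin: "finite (card ` {C. vertex_cover V E C})" using fV by (meson finite_Pow_iff finite_subset finite_imageI)
    have "Min (card ` {C. vertex_cover V E C}) = card A"
    proof (rule Min_eqI[OF fin])
      fix y assume "y \<in> card ` {C. vertex_cover V E C}"
      then obtain C where "vertex_cover V E C" "y = card C" by blast
      thus "card A \<le> y" using vc_ge by simp
    next
      show "card A \<in> card ` {C. vertex_cover V E C}" using vcA by blast
    qed
    thus ?thesis using r unfolding alpha0_def by simp
  qed
  define N where "N = (\<lambda>a. {b \<in> B. {a, b} \<in> E})"
  have hallc: "\<forall>S\<subseteq>A. card S \<le> card (\<Union>(N ` S))"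
  proof (intro allI impI)
    fix S assume SA: "S \<subseteq> A"
    define C where "C = (A - S) \<union> \<Union>(N ` S)"
    have NB: "\<Union>(N ` S) \<subseteq> B" unfolding N_def by blast
    have CV: "C \<subseteq> V" unfolding C_def using AV BV NB by blast
    have vc: "vertex_cover V E C" unfolding vertex_cover_def
    proof (intro conjI ballI)
      show "C \<subseteq> V" by (rule CV)
      fix e assume e: "e \<in> E"
      then obtain a b where ab: "a \<in> A" "b \<in> B" "e = {a, b}" using AB(3) by blast
      show "e \<inter> C \<noteq> {}"
      proof (cases "a \<in> S")
        case True
        hence "b \<in> N a" unfolding N_def using ab e by blast
        hence "b \<in> C" unfolding C_def using True by blast
        thus ?thesis using ab(3) by blast
      next
        case False
        hence "a \<in> C" unfolding C_def using ab(1) by blast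
        thus ?thesis using ab(3) by blast
      qed
    qed
    have fN: "finite (\<Union>(N ` S))" using finite_subset[OF NB fB] .
    have fS: "finite S" using finite_subset[OF SA fA] .
    have "card A \<le> card C" using vc_ge[OF vc] .
    also have "card C \<le> card (A - S) + card (\<Union>(N ` S))" unfolding C_def by (rule card_Un_le)
    also have "card (A - S) = card A - card S" using card_Diff_subset[OF fS SA] .
    finally have "card A \<le> card A - card S + card (\<Union>(N ` S))" .
    moreover have "card S \<le> card A" using card_mono[OF fA SA] .
    ultimately show "card S \<le> card (\<Union>(N ` S))" by linarith
  qed
  have fNa: "\<forall>a\<in>A. finite (N a)" unfolding N_def using fB by simp
  obtain g where g: "inj_on g A" "\<forall>a\<in>A. g a \<in> N a" using hall[OF fA fNa hallc] by blast
  have gAB: "g ` A \<subseteq> B" using g(2) unfolding N_def by blast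
  have "card (g ` A) = card B" using card_image[OF g(1)] cB by simp
  hence "g ` A = B" using card_subset_eq[OF fB gAB] by simp
  hence bg: "bij_betw g A B" using g(1) unfolding bij_betw_def by simp
  obtain h where h: "bij_betw h {1..card A} A" using ex_bij_betw_nat_finite_1[OF fA] by blast
  hence h': "bij_betw h {1..r} A" using rA by simp
  define k where "k = (\<lambda>i. if i \<le> r then h i else g (h (i - r)))"
  have k1: "bij_betw k {1..r} A"
    using h' by (rule bij_betw_cong[THEN iffD1, rotated]) (simp add: k_def)
  have "bij_betw (g \<circ> (h \<circ> (\<lambda>i. i - r))) {r+1..2*r} B"
    using bij_betw_trans[OF bij_betw_trans[OF shift_bij h'] bg] .
  hence k2: "bij_betw k {r+1..2*r} B"
    by (rule bij_betw_cong[THEN iffD1, rotated]) (simp add: k_def)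
  have k12: "bij_betw k ({1..r} \<union> {r+1..2*r}) (A \<union> B)" using bij_betw_combine[OF k1 k2 AB(2)] .
  have iv: "{1..r} \<union> {r+1..2*r} = H_vertices r" unfolding H_vertices_def by auto
  have bk: "bij_betw k (H_vertices r) V" using k12 unfolding iv AB(1) .
  define f where "f = inv_into (H_vertices r) k"
  have bf: "bij_betw f V (H_vertices r)" unfolding f_def using bij_betw_inv_into[OF bk] .
  have fk: "\<And>i. i \<in> H_vertices r \<Longrightarrow> f (k i) = i"
    unfolding f_def using bk by (simp add: bij_betw_def inv_into_f_f)
  have injf: "inj_on f V" using bf unfolding bij_betw_def by blast
  have fV': "f ` V = H_vertices r" using bf unfolding bij_betw_def by blast
  have pair: "f (h i) = i \<and> f (g (h i)) = r + i \<and> h i \<in> V \<and> g (h i) \<in> V \<and> {h i, g (h i)} \<in> E"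
    if i: "1 \<le> i" "i \<le> r" for i
  proof -
    have i1: "i \<in> H_vertices r" "r + i \<in> H_vertices r" unfolding H_vertices_def using i by auto
    have "k i = h i" unfolding k_def using i by simp
    moreover have "k (r + i) = g (h i)" unfolding k_def using i by simp
    moreover have hA: "h i \<in> A" using h' i unfolding bij_betw_def by auto
    moreover have "g (h i) \<in> N (h i)" using g(2) hA by blast
    ultimately show ?thesis using fk[OF i1(1)] fk[OF i1(2)] AV BV unfolding N_def by auto
  qed
  have covmap: "f ` C \<in> cover_graph_vertices (H_vertices r) (H_edges r)"
    if C: "minimal_vertex_cover V E C" for C
  proof -
    have vc: "vertex_cover V E C" using C unfolding minimal_vertex_cover_def by blast
    have CV: "C \<subseteq> V" using vc unfolding vertex_cover_def by blast
    have cC: "card (f ` C) = r" using card_image[OF inj_on_subset[OF injf CV]] cm[OF C] rA by simp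
    have sub: "f ` C \<subseteq> {1..2*r}" using CV fV' unfolding H_vertices_def by blast
    have hit: "\<forall>i. 1 \<le> i \<and> i \<le> r \<longrightarrow> i \<in> f ` C \<or> r + i \<in> f ` C"
    proof (intro allI impI)
      fix i assume i: "1 \<le> i \<and> i \<le> r"
      note p = pair[OF conjunct1[OF i] conjunct2[OF i]]
      have pE: "{h i, g (h i)} \<in> E" using p by blast
      have p1: "f (h i) = i" and p2: "f (g (h i)) = r + i" using p by blast+
      have "\<forall>e\<in>E. e \<inter> C \<noteq> {}" using vc unfolding vertex_cover_def by blast
      hence "{h i, g (h i)} \<inter> C \<noteq> {}" using pE by blast
      hence "h i \<in> C \<or> g (h i) \<in> C" by blast
      thus "i \<in> f ` C \<or> r + i \<in> f ` C"
      proof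
        assume "h i \<in> C"
        hence "f (h i) \<in> f ` C" by (rule imageI)
        thus ?thesis using p1 by simp
      next
        assume "g (h i) \<in> C"
        hence "f (g (h i)) \<in> f ` C" by (rule imageI)
        thus ?thesis using p2 by simp
      qed
    qed
    have "minimal_vertex_cover (H_vertices r) (H_edges r) (f ` C)" using min_H2[OF sub hit] cC by simp
    thus ?thesis unfolding cover_graph_vertices_def by simp
  qed
  have edgemap: "{f ` C, f ` D} \<in> cover_graph_edges (H_vertices r) (H_edges r)"
    if e: "{C, D} \<in> cover_graph_edges V E" for C D
  proof -
    obtain C' D' where CD: "{C, D} = {C', D'}" "minimal_vertex_cover V E C'" "minimal_vertex_cover V E D'"
      "C' \<noteq> D'" "card (C' \<union> D') = card C' + 1"
    proof -
      have "\<exists>C' D'. {C, D} = {C', D'} \<and> minimal_vertex_cover V E C' \<and> minimal_vertex_cover V E D'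
        \<and> C' \<noteq> D' \<and> card (C' \<union> D') = card C' + 1"
        using e unfolding cover_graph_edges_def by (rule CollectD)
      thus ?thesis
        apply (elim exE conjE)
        apply (rule that)
        apply assumption+
        done
    qed
    have CV: "C' \<subseteq> V" "D' \<subseteq> V" using CD(2,3) unfolding minimal_vertex_cover_def vertex_cover_def by blast+
    have m1: "minimal_vertex_cover (H_vertices r) (H_edges r) (f ` C')"
      using covmap[OF CD(2)] unfolding cover_graph_vertices_def by simp
    have m2: "minimal_vertex_cover (H_vertices r) (H_edges r) (f ` D')"
      using covmap[OF CD(3)] unfolding cover_graph_vertices_def by simp
    have ne: "f ` C' \<noteq> f ` D'" using CD(4) inj_on_image_eq_iff[OF injf CV] by simp
    have "card (f ` C' \<union> f ` D') = card (f ` (C' \<union> D'))" by (simp add: image_Un)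
    also have "\<dots> = card (C' \<union> D')" using card_image[OF inj_on_subset[OF injf]] CV by simp
    also have "\<dots> = card C' + 1" using CD(5) .
    also have "card C' = card (f ` C')" using card_image[OF inj_on_subset[OF injf CV(1)]] by simp
    finally have cc: "card (f ` C' \<union> f ` D') = card (f ` C') + 1" .
    have "{f ` C', f ` D'} \<in> cover_graph_edges (H_vertices r) (H_edges r)"
      unfolding cover_graph_edges_def
      by (rule CollectI, intro exI[of _ "f ` C'"] exI[of _ "f ` D'"] conjI refl m1 m2 ne cc)
    moreover have "{f ` C, f ` D} = {f ` C', f ` D'}"
      using CD(1) by (auto simp: doubleton_eq_iff)
    ultimately show ?thesis by simp
  qed
  show ?thesis
  proof (intro exI conjI allI impI ballI)
    show "bij_betw f V (H_vertices r)" by (rule bf)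
  next
    fix i assume i: "1 \<le> i \<and> i \<le> r"
    show "\<exists>a\<in>V. \<exists>b\<in>V. f a = i \<and> f b = r + i \<and> {a, b} \<in> E"
      using pair[OF conjunct1[OF i] conjunct2[OF i]] by blast
  next
    fix C assume "C \<in> cover_graph_vertices V E"
    thus "f ` C \<in> cover_graph_vertices (H_vertices r) (H_edges r)"
      using covmap unfolding cover_graph_vertices_def by blast
  next
    fix C D assume "{C, D} \<in> cover_graph_edges V E"
    thus "{f ` C, f ` D} \<in> cover_graph_edges (H_vertices r) (H_edges r)" by (rule edgemap)
  qed
qed


theorem proposition4p9:
  shows "(\<forall>r::nat. r \<ge> 1 \<longrightarrow>
            bipartite (cover_graph_vertices (H_vertices r) (H_edges r))
                      (cover_graph_edges (H_vertices r) (H_edges r))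
          \<and> regular (cover_graph_vertices (H_vertices r) (H_edges r))
                    (cover_graph_edges (H_vertices r) (H_edges r)) r
          \<and> card (cover_graph_vertices (H_vertices r) (H_edges r)) = 2 ^ r
          \<and> card (cover_graph_edges (H_vertices r) (H_edges r)) = r * 2 ^ (r - 1))
   \<and> (\<forall>(V::'a set) E r. simple_graph V E \<and> unmixed V E \<and> bipartite V E
          \<and> no_isolated_vertices V E \<and> r = alpha0 V E \<longrightarrow>
        (\<exists>f. bij_betw f V (H_vertices r)
           \<and> (\<forall>i. 1 \<le> i \<and> i \<le> r \<longrightarrow>
                 (\<exists>a\<in>V. \<exists>b\<in>V. f a = i \<and> f b = r + i \<and> {a, b} \<in> E))
           \<and> (\<forall>C \<in> cover_graph_vertices V E.
                 f ` C \<in> cover_graph_vertices (H_vertices r) (H_edges r))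
           \<and> (\<forall>C D. {C, D} \<in> cover_graph_edges V E \<longrightarrow>
                 {f ` C, f ` D} \<in> cover_graph_edges (H_vertices r) (H_edges r)))
        \<and> bipartite (cover_graph_vertices V E) (cover_graph_edges V E))"
proof (intro conjI allI impI)
  fix r :: nat assume r: "r \<ge> 1"
  show "bipartite (cover_graph_vertices (H_vertices r) (H_edges r))
                      (cover_graph_edges (H_vertices r) (H_edges r))" by (rule bip_H)
  show "regular (cover_graph_vertices (H_vertices r) (H_edges r))
                    (cover_graph_edges (H_vertices r) (H_edges r)) r" by (rule regular_H)
  show "card (cover_graph_vertices (H_vertices r) (H_edges r)) = 2 ^ r" by (rule card_VH)
  show "card (cover_graph_edges (H_vertices r) (H_edges r)) = r * 2 ^ (r - 1)" using card_EH[OF r] .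
next
  fix V :: "'a set" and E r
  assume a: "simple_graph V E \<and> unmixed V E \<and> bipartite V E
          \<and> no_isolated_vertices V E \<and> r = alpha0 V E"
  note pb = partb[of V E r] a
  show ex: "\<exists>f. bij_betw f V (H_vertices r)
           \<and> (\<forall>i. 1 \<le> i \<and> i \<le> r \<longrightarrow>
                 (\<exists>a\<in>V. \<exists>b\<in>V. f a = i \<and> f b = r + i \<and> {a, b} \<in> E))
           \<and> (\<forall>C \<in> cover_graph_vertices V E.
                 f ` C \<in> cover_graph_vertices (H_vertices r) (H_edges r))
           \<and> (\<forall>C D. {C, D} \<in> cover_graph_edges V E \<longrightarrow>
                 {f ` C, f ` D} \<in> cover_graph_edges (H_vertices r) (H_edges r))"
    using partb a by blast
  then obtain f where f: "\<forall>C \<in> cover_graph_vertices V E.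
                 f ` C \<in> cover_graph_vertices (H_vertices r) (H_edges r)"
    "\<forall>C D. {C, D} \<in> cover_graph_edges V E \<longrightarrow>
                 {f ` C, f ` D} \<in> cover_graph_edges (H_vertices r) (H_edges r)" by blast
  show "bipartite (cover_graph_vertices V E) (cover_graph_edges V E)"
    using bip_transfer[OF bip_H f(1) f(2)] .
qed

end
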